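(* Let $D=(V,E;s,t)$, $N$ be as in the context with $\sigma_N\ge2$. In the sequential linear programs for the nucleon of $\widetilde\Gamma_D$, one has $\epsilon_1=0$ and $\widetilde X_1=\mathcal{C}(\widetilde\Gamma_D)$.
   Context: $D=(V,E;s,t)$ is a directed network with unit arc capacities (parallel arcs allowed); $N\subseteq E$ is the set of private arcs (players), $M=E\setminus N$ public arcs; every $s$-$t$ path contains an arc of $N$ and every arc lies on some $s$-$t$ path. $\sigma_N$ is the maximum number of $s$-$t$ paths pairwise sharing no arc of $N$. For $S\subseteq N$, $\gamma(S)$ is the maximum number of pairwise arc-disjoint $s$-$t$ paths in $D_S=(V,S\cup M;s,t)$. Auxiliary game $\widetilde\Gamma_D=(N,\tilde\gamma)$: $\tilde\gamma(N)=\sigma_N$, $\tilde\gamma(S)=\gamma(S)$ for $S\subsetneq N$; $\chi(\widetilde\Gamma_D)=\{x\in\mathbb{R}^N_{\ge0}:x(N)=\sigma_N\}$, $x(S)=\sum_{i\in S}x_i$; core $\mathcal{C}(\widetilde\Gamma_D)=\{x\in\chi(\widetilde\Gamma_D):x(S)\ge\tilde\gamma(S)\ \forall S\}$. For $X\subseteq\mathbb{R}^N$, $\mathrm{fix}(X)=\{S\subseteq N: x(S) \text{ is the same for all } x\in X\}$. Sequential LPs: $\widetilde X_0=\chi(\widetilde\Gamma_D)$, $\mathrm{fix}(\widetilde X_0)=\{\emptyset,N\}$, $\epsilon_0=0$; for $k\ge0$, $\widetilde{LP}_{k+1}$ maximizes $\epsilon$ subject to $x(S)\ge(1+\epsilon)\tilde\gamma(S)$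 for all $S\in 2^N\setminus\mathrm{fix}(\widetilde X_k)$ and $x\in\widetilde X_k$; $\epsilon_{k+1}$ is its optimal value and $\widetilde X_{k+1}$ is the set of $x$ such that $(x,\epsilon_{k+1})$ is optimal. *)

theory Defs
  imports Main "HOL.Real"
begin

text \<open>A directed multigraph is given by an arc set E (of arbitrary type 'e, so parallel
arcs are allowed) together with tail and head maps.\<close>

definition st_path :: "('e \<Rightarrow> 'v) \<Rightarrow> ('e \<Rightarrow> 'v) \<Rightarrow> 'v \<Rightarrow> 'v \<Rightarrow> 'e set \<Rightarrow> 'e list \<Rightarrow> bool" where
  "st_path tail head s t A p \<longleftrightarrow>
     p \<noteq> [] \<and> set p \<subseteq> A \<and> tail (p ! 0) = s \<and> head (last p) = t \<and>
     (\<forall>i. Suc i < length p \<longrightarrow> head (p ! i) = tail (p ! Suc i)) \<and>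
     distinct (s # map head p)"

definition gamma_val :: "('e \<Rightarrow> 'v) \<Rightarrow> ('e \<Rightarrow> 'v) \<Rightarrow> 'v \<Rightarrow> 'v \<Rightarrow> 'e set \<Rightarrow> 'e set \<Rightarrow> 'e set \<Rightarrow> nat" where
  "gamma_val tail head s t E N S = Max {card P | P.
      (\<forall>p\<in>P. st_path tail head s t (S \<union> (E - N)) p) \<and>
      (\<forall>p\<in>P. \<forall>q\<in>P. p \<noteq> q \<longrightarrow> set p \<inter> set q = {})}"

definition sigma_val :: "('e \<Rightarrow> 'v) \<Rightarrow> ('e \<Rightarrow> 'v) \<Rightarrow> 'v \<Rightarrow> 'v \<Rightarrow> 'e set \<Rightarrow> 'e set \<Rightarrow> nat" where
  "sigma_val tail head s t E N = Max {card P | P.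
      (\<forall>p\<in>P. st_path tail head s t E p) \<and>
      (\<forall>p\<in>P. \<forall>q\<in>P. p \<noteq> q \<longrightarrow> set p \<inter> set q \<inter> N = {})}"

definition gamma_tilde :: "('e \<Rightarrow> 'v) \<Rightarrow> ('e \<Rightarrow> 'v) \<Rightarrow> 'v \<Rightarrow> 'v \<Rightarrow> 'e set \<Rightarrow> 'e set \<Rightarrow> 'e set \<Rightarrow> real" where
  "gamma_tilde tail head s t E N S =
     (if S = N then real (sigma_val tail head s t E N) else real (gamma_val tail head s t E N S))"

text \<open>Vectors in R^N are represented as functions 'e \<Rightarrow> real vanishing outside N.\<close>
definition imputations :: "('e \<Rightarrow> 'v) \<Rightarrow> ('e \<Rightarrow> 'v) \<Rightarrow> 'v \<Rightarrow> 'v \<Rightarrow> 'e set \<Rightarrow> 'e set \<Rightarrow> ('e \<Rightarrow> real) set" where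
  "imputations tail head s t E N = {x. (\<forall>i. i \<notin> N \<longrightarrow> x i = 0) \<and> (\<forall>i\<in>N. x i \<ge> 0) \<and>
      sum x N = real (sigma_val tail head s t E N)}"

definition core_tilde :: "('e \<Rightarrow> 'v) \<Rightarrow> ('e \<Rightarrow> 'v) \<Rightarrow> 'v \<Rightarrow> 'v \<Rightarrow> 'e set \<Rightarrow> 'e set \<Rightarrow> ('e \<Rightarrow> real) set" where
  "core_tilde tail head s t E N = {x \<in> imputations tail head s t E N.
      \<forall>S. S \<subseteq> N \<longrightarrow> sum x S \<ge> gamma_tilde tail head s t E N S}"

definition fixset :: "'e set \<Rightarrow> ('e \<Rightarrow> real) set \<Rightarrow> 'e set set" where
  "fixset N X = {S. S \<subseteq> N \<and> (\<forall>x\<in>X. \<forall>y\<in>X. sum x S = sum y S)}"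

definition lp_feasible :: "'e set \<Rightarrow> ('e set \<Rightarrow> real) \<Rightarrow> ('e \<Rightarrow> real) set \<Rightarrow> real \<Rightarrow> ('e \<Rightarrow> real) \<Rightarrow> bool" where
  "lp_feasible N v X e x \<longleftrightarrow> x \<in> X \<and>
     (\<forall>S. S \<subseteq> N \<and> S \<notin> fixset N X \<longrightarrow> sum x S \<ge> (1 + e) * v S)"

definition lp_opt_value :: "'e set \<Rightarrow> ('e set \<Rightarrow> real) \<Rightarrow> ('e \<Rightarrow> real) set \<Rightarrow> real" where
  "lp_opt_value N v X = (GREATEST e. \<exists>x. lp_feasible N v X e x)"

definition lp_opt_set :: "'e set \<Rightarrow> ('e set \<Rightarrow> real) \<Rightarrow> ('e \<Rightarrow> real) set \<Rightarrow> ('e \<Rightarrow> real) set" where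
  "lp_opt_set N v X = {x. lp_feasible N v X (lp_opt_value N v X) x}"

end

theory Submission
  imports Defs
begin

definition dir :: "bool \<Rightarrow> int" where "dir b = (if b then 1 else -1)"

locale netw =
  fixes tail head :: "'e \<Rightarrow> 'v" and s t :: 'v and E N :: "'e set"
  assumes finE: "finite E" and st: "s \<noteq> t" and NE: "N \<subseteq> E"
    and hitN: "\<forall>p. st_path tail head s t E p \<longrightarrow> set p \<inter> N \<noteq> {}"
begin

fun sdst :: "'e \<times> bool \<Rightarrow> 'v" where "sdst (e,b) = (if b then head e else tail e)"
fun ssrc :: "'e \<times> bool \<Rightarrow> 'v" where "ssrc (e,b) = (if b then tail e else head e)"

fun walk :: "'v \<Rightarrow> ('e \<times> bool) list \<Rightarrow> 'v \<Rightarrow> bool" where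
  "walk u [] v = (u = v)"
| "walk u (x # w) v = (ssrc x = u \<and> walk (sdst x) w v)"

fun gw :: "('e \<times> bool) list \<Rightarrow> 'e \<Rightarrow> int" where
  "gw [] e = 0"
| "gw ((a,b) # w) e = (if a = e then dir b else 0) + gw w e"

definition exc :: "('e \<Rightarrow> int) \<Rightarrow> 'v \<Rightarrow> int" where
  "exc g v = (\<Sum>e\<in>{e\<in>E. head e = v}. g e) - (\<Sum>e\<in>{e\<in>E. tail e = v}. g e)"

lemma walk_append: "walk u (w1 @ w2) v \<longleftrightarrow> (\<exists>m. walk u w1 m \<and> walk m w2 v)"
  by (induction w1 arbitrary: u) auto

lemma walk_verts: "walk u w v \<Longrightarrow> x \<in> set w \<Longrightarrow> ssrc x \<in> set (u # map sdst w) \<and> sdst x \<in> set (map sdst w)"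
  by (induction w arbitrary: u) auto

lemma walk_end: "walk u w v \<Longrightarrow> v = u \<or> v \<in> sdst ` set w"
  by (induction w arbitrary: u) auto

lemma gw_notin: "a \<notin> fst ` set w \<Longrightarrow> gw w a = 0"
  by (induction w) auto

lemma walk_simple_notin:
  assumes "walk u ((a,b) # w) v" "distinct (u # map sdst ((a,b) # w))"
  shows "a \<notin> fst ` set w"
proof
  assume "a \<in> fst ` set w"
  then obtain b' where ab: "(a,b') \<in> set w" by force
  have W: "walk (sdst (a,b)) w v" using assms(1) by simp
  from walk_verts[OF W ab] have
    "ssrc (a,b') \<in> set (map sdst ((a,b)#w))" "sdst (a,b') \<in> set (map sdst ((a,b)#w))" by auto
  moreover have "u = ssrc (a,b)" using assms(1) by simp
  ultimately have "u \<in> set (map sdst ((a,b)#w))"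
    by (cases b; cases b') (auto split: if_splits)
  with assms(2) show False by simp
qed

lemma gw_simple:
  "walk u w v \<Longrightarrow> distinct (u # map sdst w) \<Longrightarrow> (a,b) \<in> set w \<Longrightarrow> gw w a = dir b"
proof (induction w arbitrary: u)
  case Nil then show ?case by simp
next
  case (Cons x w)
  obtain a1 b1 where x: "x = (a1,b1)" by force
  have ni: "a1 \<notin> fst ` set w" using walk_simple_notin Cons.prems x by blast
  show ?case
  proof (cases "a = a1")
    case True
    then have "(a,b) = (a1,b1)" using Cons.prems(3) ni x by force
    then show ?thesis using x ni gw_notin True by simp
  next
    case False
    then have "(a,b) \<in> set w" using Cons.prems(3) x by auto
    moreover have "walk (sdst x) w v" "distinct (sdst x # map sdst w)" using Cons.prems by auto
    ultimately have "gw w a = dir b" using Cons.IH by blast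
    then show ?thesis using x False by simp
  qed
qed

definition okf :: "('e \<Rightarrow> int) \<Rightarrow> int \<Rightarrow> 'e \<times> bool \<Rightarrow> bool" where
  "okf f c x = (0 \<le> f (fst x) + c * dir (snd x) \<and> (fst x \<in> N \<longrightarrow> f (fst x) + c * dir (snd x) \<le> 1))"

lemma aug_cap:
  assumes "walk u w v" "distinct (u # map sdst w)" "\<forall>x\<in>set w. okf f c x"
    "\<forall>e. 0 \<le> f e" "\<forall>e\<in>N. f e \<le> 1"
  shows "0 \<le> f e + c * gw w e \<and> (e \<in> N \<longrightarrow> f e + c * gw w e \<le> 1)"
  using assms
proof (induction w arbitrary: u e)
  case Nil then show ?case by simp
next
  case (Cons x w)
  obtain a1 b1 where x: "x = (a1,b1)" by force
  have ni: "a1 \<notin> fst ` set w" using walk_simple_notin Cons.prems x by blast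
  have IH: "\<And>e. 0 \<le> f e + c * gw w e \<and> (e \<in> N \<longrightarrow> f e + c * gw w e \<le> 1)"
    using Cons.IH[of "sdst x"] Cons.prems by auto
  show ?case
  proof (cases "e = a1")
    case True
    then show ?thesis using x ni gw_notin[OF ni] Cons.prems(3)
      by (simp add: okf_def)
  next
    case False
    then show ?thesis using IH[of e] x by simp
  qed
qed


lemma exc_sum:
  assumes "finite X"
  shows "(\<Sum>v\<in>X. exc g v) = (\<Sum>e\<in>E. g e * (of_bool (head e \<in> X) - of_bool (tail e \<in> X)))"
proof -
  have h: "(\<Sum>v\<in>X. \<Sum>e\<in>{e\<in>E. h e = v}. g e) = (\<Sum>e\<in>E. g e * of_bool (h e \<in> X))" for h :: "'e \<Rightarrow> 'v"
  proof -
    have "(\<Sum>v\<in>X. \<Sum>e\<in>{e\<in>E. h e = v}. g e) = (\<Sum>v\<in>X. \<Sum>e\<in>E. if h e = v then g e else 0)"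
      using finE by (simp add: sum.inter_filter)
    also have "\<dots> = (\<Sum>e\<in>E. \<Sum>v\<in>X. if h e = v then g e else 0)" by (rule sum.swap)
    also have "\<dots> = (\<Sum>e\<in>E. g e * of_bool (h e \<in> X))"
      using assms by (intro sum.cong) (auto simp: sum.delta)
    finally show ?thesis .
  qed
  show ?thesis unfolding exc_def sum_subtractf[symmetric] using h[of head] h[of tail]
    by (simp add: sum_subtractf right_diff_distrib)
qed

lemma exc_lin: "exc (\<lambda>e. f e + c * g e) v = exc f v + c * exc g v"
  unfolding exc_def by (simp add: sum.distrib sum_distrib_left right_diff_distrib)

lemma exc_single:
  assumes "a \<in> E"
  shows "exc (\<lambda>e. if a = e then d else 0) x = d * (of_bool (head a = x) - of_bool (tail a = x))"
proof -
  have "(\<Sum>e\<in>{e\<in>E. h e = x}. if a = e then d else 0) = d * of_bool (h a = x)" for h :: "'e \<Rightarrow> 'v"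
    using finE assms by (simp add: sum.delta)
  then show ?thesis unfolding exc_def by (simp add: right_diff_distrib)
qed

lemma exc_gw: "walk u w v \<Longrightarrow> \<forall>x\<in>set w. fst x \<in> E \<Longrightarrow> exc (gw w) y = of_bool (y = v) - of_bool (y = u)"
proof (induction w arbitrary: u)
  case Nil then show ?case by (simp add: exc_def)
next
  case (Cons x w)
  obtain a b where x: "x = (a,b)" by force
  have "gw (x # w) = (\<lambda>e. (if a = e then dir b else 0) + 1 * gw w e)" using x by auto
  then have "exc (gw (x # w)) y = exc (\<lambda>e. if a = e then dir b else 0) y + exc (gw w) y"
    using exc_lin[of "\<lambda>e. if a = e then dir b else 0" 1 "gw w" y] by simp
  also have "\<dots> = dir b * (of_bool (head a = y) - of_bool (tail a = y)) + (of_bool (y = v) - of_bool (y = sdst x))"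
    using Cons x exc_single[of a "dir b" y] by auto
  also have "\<dots> = of_bool (y = v) - of_bool (y = u)"
    using Cons.prems x by (cases b) (auto simp: dir_def)
  finally show ?case .
qed

definition flow :: "('e \<Rightarrow> int) \<Rightarrow> bool" where
  "flow f \<longleftrightarrow> (\<forall>e. 0 \<le> f e) \<and> (\<forall>e\<in>N. f e \<le> 1) \<and> (\<forall>v. v \<noteq> s \<longrightarrow> v \<noteq> t \<longrightarrow> exc f v = 0)"

definition val :: "('e \<Rightarrow> int) \<Rightarrow> int" where "val f = - exc f s"

lemma aug_flow:
  assumes "flow f" "walk s w t" "distinct (s # map sdst w)" "\<forall>x\<in>set w. fst x \<in> E \<and> okf f c x"
  shows "flow (\<lambda>e. f e + c * gw w e) \<and> val (\<lambda>e. f e + c * gw w e) = val f + c"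
proof -
  have cap: "0 \<le> f e + c * gw w e \<and> (e \<in> N \<longrightarrow> f e + c * gw w e \<le> 1)" for e
    using aug_cap[OF assms(2,3)] assms(1,4) unfolding flow_def by blast
  have ex: "exc (\<lambda>e. f e + c * gw w e) y = exc f y + c * (of_bool (y = t) - of_bool (y = s))" for y
    using exc_lin exc_gw[OF assms(2)] assms(4) by simp
  show ?thesis using cap ex assms(1) st unfolding flow_def val_def by auto
qed

lemma simple_walk: "walk u w v \<Longrightarrow> \<exists>w'. walk u w' v \<and> distinct (u # map sdst w') \<and> set w' \<subseteq> set w"
proof (induction w arbitrary: u)
  case Nil then show ?case by auto
next
  case (Cons x w)
  have "walk (sdst x) w v" using Cons.prems by simp
  then obtain w'' where w'': "walk (sdst x) w'' v" "distinct (sdst x # map sdst w'')" "set w'' \<subseteq> set w"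
    using Cons.IH by blast
  show ?case
  proof (cases "u = sdst x")
    case True then show ?thesis using w'' by auto
  next
    case F: False
    show ?thesis
    proof (cases "u \<in> sdst ` set w''")
      case True
      then obtain y where y: "y \<in> set w''" "sdst y = u" by auto
      then obtain w1 w2 where sp: "w'' = w1 @ y # w2" using split_list by metis
      have "walk (sdst y) w2 v" using w''(1) sp by (auto simp: walk_append)
      moreover have "distinct (u # map sdst w2)" using w''(2) sp y by auto
      ultimately show ?thesis using y sp w''(3) by auto
    next
      case False
      then show ?thesis using F w'' Cons.prems by (intro exI[of _ "x # w''"]) auto
    qed
  qed
qed

definition reach :: "('e \<times> bool \<Rightarrow> bool) \<Rightarrow> 'v set" where
  "reach P = {v. \<exists>w. walk s w v \<and> (\<forall>x\<in>set w. P x)}"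

lemma reach_s: "s \<in> reach P" unfolding reach_def by (auto intro: exI[of _ "[]"])

lemma reach_step: assumes "u \<in> reach P" "P x" "ssrc x = u" shows "sdst x \<in> reach P"
proof -
  obtain w where w: "walk s w u" "\<forall>y\<in>set w. P y" using assms(1) unfolding reach_def by auto
  then have "walk s (w @ [x]) (sdst x)" using assms by (auto simp: walk_append)
  then show ?thesis using w assms unfolding reach_def by (auto intro!: exI[of _ "w @ [x]"])
qed

lemma reach_fin: assumes "\<forall>x. P x \<longrightarrow> fst x \<in> E" shows "finite (reach P)"
proof -
  have "reach P \<subseteq> insert s (tail ` E \<union> head ` E)"
  proof
    fix v assume "v \<in> reach P"
    then obtain w where w: "walk s w v" "\<forall>x\<in>set w. P x" unfolding reach_def by auto
    from walk_end[OF w(1)] show "v \<in> insert s (tail ` E \<union> head ` E)"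
    proof
      assume "v \<in> sdst ` set w"
      then obtain a b where "(a,b) \<in> set w" "v = sdst (a,b)" by auto
      then show ?thesis using w(2) assms by (auto split: if_splits)
    qed simp
  qed
  then show ?thesis using finE finite_subset by blast
qed

lemma reach_walk: "v \<in> reach P \<Longrightarrow> \<exists>w. walk s w v \<and> distinct (s # map sdst w) \<and> (\<forall>x\<in>set w. P x)"
  unfolding reach_def using simple_walk by blast

lemma exc_reach:
  assumes "flow f" "finite X" "s \<in> X" "t \<notin> X"
  shows "(\<Sum>v\<in>X. exc f v) = - val f"
proof -
  have "(\<Sum>v\<in>X. exc f v) = exc f s + (\<Sum>v\<in>X - {s}. exc f v)"
    using assms by (simp add: sum.remove)
  also have "(\<Sum>v\<in>X - {s}. exc f v) = 0" using assms unfolding flow_def by (intro sum.neutral) auto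
  finally show ?thesis by (simp add: val_def)
qed


abbreviation fwd :: "'e list \<Rightarrow> ('e \<times> bool) list" where "fwd p \<equiv> map (\<lambda>e. (e, True)) p"

lemma path_walk:
  "p \<noteq> [] \<Longrightarrow> (tail (p!0) = u \<and> head (last p) = v \<and> (\<forall>i. Suc i < length p \<longrightarrow> head (p!i) = tail (p!Suc i)))
     \<longleftrightarrow> walk u (fwd p) v"
proof (induction p arbitrary: u)
  case Nil then show ?case by simp
next
  case (Cons a p)
  show ?case
  proof (cases "p = []")
    case True then show ?thesis by auto
  next
    case False
    have "(\<forall>i. Suc i < length (a#p) \<longrightarrow> head ((a#p)!i) = tail ((a#p)!Suc i)) \<longleftrightarrow>
       head a = tail (p!0) \<and> (\<forall>i. Suc i < length p \<longrightarrow> head (p!i) = tail (p!Suc i))"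
      (is "?L \<longleftrightarrow> ?R")
    proof
      assume L: ?L
      have "head a = tail (p!0)" using L[rule_format, of 0] False by simp
      moreover have "\<forall>i. Suc i < length p \<longrightarrow> head (p!i) = tail (p!Suc i)"
      proof (intro allI impI)
        fix i assume "Suc i < length p"
        then show "head (p!i) = tail (p!Suc i)" using L[rule_format, of "Suc i"] by simp
      qed
      ultimately show ?R by blast
    next
      assume R: ?R
      show ?L
      proof (intro allI impI)
        fix i assume "Suc i < length (a#p)"
        then show "head ((a#p)!i) = tail ((a#p)!Suc i)" using R by (cases i) auto
      qed
    qed
    then show ?thesis using Cons.IH[OF False, of "head a"] False by auto
  qed
qed

lemma st_path_walk: "st_path tail head s t A p \<longleftrightarrow>
   p \<noteq> [] \<and> set p \<subseteq> A \<and> walk s (fwd p) t \<and> distinct (s # map head p)"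
  unfolding st_path_def using path_walk by (auto simp: comp_def)

lemma walk_cross: "walk u w v \<Longrightarrow> u \<in> X \<Longrightarrow> v \<notin> X \<Longrightarrow> \<exists>x\<in>set w. ssrc x \<in> X \<and> sdst x \<notin> X"
  by (induction w arbitrary: u) auto

definition resf :: "('e \<Rightarrow> int) \<Rightarrow> 'e \<times> bool \<Rightarrow> bool" where
  "resf f x = (fst x \<in> E \<and> okf f 1 x)"

lemma cut_or_aug:
  assumes f: "flow f"
  shows "(\<exists>g. flow g \<and> val g = val f + 1) \<or>
         (\<exists>C\<subseteq>N. (\<forall>p. st_path tail head s t E p \<longrightarrow> set p \<inter> C \<noteq> {}) \<and> int (card C) = val f)"
proof (cases "t \<in> reach (resf f)")
  case True
  then obtain w where w: "walk s w t" "distinct (s # map sdst w)" "\<forall>x\<in>set w. resf f x"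
    using reach_walk by blast
  then have "flow (\<lambda>e. f e + 1 * gw w e) \<and> val (\<lambda>e. f e + 1 * gw w e) = val f + 1"
    using aug_flow[OF f w(1,2)] unfolding resf_def by blast
  then show ?thesis by blast
next
  case False
  define R where "R = reach (resf f)"
  have tR: "t \<notin> R" using False R_def by simp
  have sR: "s \<in> R" using reach_s R_def by simp
  have finR: "finite R" unfolding R_def by (rule reach_fin) (simp add: resf_def)
  have f0: "\<forall>e. 0 \<le> f e" and f1: "\<forall>e\<in>N. f e \<le> 1" using f unfolding flow_def by auto
  define C where "C = {e\<in>N. tail e \<in> R \<and> head e \<notin> R}"
  have out: "e \<in> C \<and> f e = 1" if "e \<in> E" "tail e \<in> R" "head e \<notin> R" for e
  proof -
    have "\<not> resf f (e, True)" using reach_step[of "tail e" "resf f" "(e,True)"] that R_def by auto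
    then have "e \<in> N" "\<not> f e + 1 \<le> 1" using that f0 unfolding resf_def okf_def dir_def by auto
    then show ?thesis using f1 that C_def by fastforce
  qed
  have inn: "f e = 0" if "e \<in> E" "head e \<in> R" "tail e \<notin> R" for e
  proof -
    have "\<not> resf f (e, False)" using reach_step[of "head e" "resf f" "(e,False)"] that R_def by auto
    then have "\<not> (0 \<le> f e - 1 \<and> (e \<in> N \<longrightarrow> f e - 1 \<le> 1))"
      using that unfolding resf_def okf_def dir_def by simp
    moreover have "0 \<le> f e" using f0 by blast
    moreover have "e \<in> N \<Longrightarrow> f e \<le> 1" using f1 by blast
    ultimately show ?thesis by (cases "e \<in> N") linarith+
  qed
  have CE: "C \<subseteq> E" using C_def NE by auto
  have "- val f = (\<Sum>e\<in>E. f e * (of_bool (head e \<in> R) - of_bool (tail e \<in> R)))"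
    using exc_reach[OF f finR sR tR] exc_sum[OF finR] by simp
  also have "\<dots> = (\<Sum>e\<in>E. - of_bool (e \<in> C))"
  proof (rule sum.cong)
    fix e assume e: "e \<in> E"
    show "f e * (of_bool (head e \<in> R) - of_bool (tail e \<in> R)) = - of_bool (e \<in> C)"
    proof (cases "tail e \<in> R")
      case True
      show ?thesis
      proof (cases "head e \<in> R")
        case h: True
        have "e \<notin> C" using C_def h by auto
        then show ?thesis using True h by simp
      next
        case h: False
        then have "e \<in> C" "f e = 1" using out[OF e True] by auto
        then show ?thesis using True h by simp
      qed
    next
      case False
      have "e \<notin> C" using C_def False by auto
      show ?thesis
      proof (cases "head e \<in> R")
        case h: True
        then have "f e = 0" using inn[OF e] False by auto
        then show ?thesis using \<open>e \<notin> C\<close> by simp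
      next
        case h: False
        then show ?thesis using False \<open>e \<notin> C\<close> by simp
      qed
    qed
  qed simp
  also have "\<dots> = - int (card C)" using finE CE
    by (simp add: sum_negf Int_absorb1)
  finally have v: "int (card C) = val f" by simp
  have "set p \<inter> C \<noteq> {}" if p: "st_path tail head s t E p" for p
  proof -
    have W: "walk s (fwd p) t" and pE: "set p \<subseteq> E" using p st_path_walk by auto
    obtain x where x: "x \<in> set (fwd p)" "ssrc x \<in> R" "sdst x \<notin> R"
      using walk_cross[OF W sR tR] by blast
    then obtain e where e: "e \<in> set p" "x = (e, True)" by auto
    then have "tail e \<in> R" "head e \<notin> R" "e \<in> E" using x pE by auto
    then have "e \<in> C" using out by blast
    then show ?thesis using e by blast
  qed
  moreover have "C \<subseteq> N" using C_def by blast
  ultimately show ?thesis using v by blast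
qed


lemma decomp:
  "flow f \<Longrightarrow> val f = int k \<Longrightarrow> \<exists>P. finite P \<and> card P = k \<and>
     (\<forall>p\<in>P. st_path tail head s t E p \<and> (\<forall>e\<in>set p \<inter> N. f e = 1)) \<and>
     (\<forall>p\<in>P. \<forall>q\<in>P. p \<noteq> q \<longrightarrow> set p \<inter> set q \<inter> N = {})"
proof (induction k arbitrary: f)
  case 0 then show ?case by (intro exI[of _ "{}"]) auto
next
  case (Suc k)
  note f = Suc.prems(1)
  have f0: "\<forall>e. 0 \<le> f e" and f1: "\<forall>e\<in>N. f e \<le> 1" using f unfolding flow_def by auto
  define Q where "Q = (\<lambda>x. fst x \<in> E \<and> snd x \<and> okf f (-1) x)"
  define R where "R = reach Q"
  have tR: "t \<in> R"
  proof (rule ccontr)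
    assume tR: "t \<notin> R"
    have sR: "s \<in> R" using reach_s R_def by simp
    have finR: "finite R" unfolding R_def by (rule reach_fin) (simp add: Q_def)
    have "- val f = (\<Sum>e\<in>E. f e * (of_bool (head e \<in> R) - of_bool (tail e \<in> R)))"
      using exc_reach[OF f finR sR tR] exc_sum[OF finR] by simp
    also have "\<dots> \<ge> 0"
    proof (rule sum_nonneg)
      fix e assume e: "e \<in> E"
      show "0 \<le> f e * (of_bool (head e \<in> R) - of_bool (tail e \<in> R))"
      proof (cases "tail e \<in> R \<and> head e \<notin> R")
        case True
        have "\<not> Q (e, True)" using reach_step[of "tail e" Q "(e,True)"] True R_def by auto
        then have "\<not> (0 \<le> f e - 1 \<and> (e \<in> N \<longrightarrow> f e - 1 \<le> 1))"
          using e unfolding Q_def okf_def dir_def by simp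
        moreover have "0 \<le> f e" using f0 by blast
        moreover have "e \<in> N \<Longrightarrow> f e \<le> 1" using f1 by blast
        ultimately have "f e = 0" by (cases "e \<in> N") linarith+
        then show ?thesis by simp
      next
        case False
        then have "0 \<le> (of_bool (head e \<in> R) - of_bool (tail e \<in> R) :: int)" by auto
        then show ?thesis using f0 by simp
      qed
    qed
    finally show False using Suc.prems(2) by simp
  qed
  then obtain w where w: "walk s w t" "distinct (s # map sdst w)" "\<forall>x\<in>set w. Q x"
    using reach_walk R_def by blast
  define g where "g = (\<lambda>e. f e + (-1) * gw w e)"
  have g: "flow g" "val g = int k"
    using aug_flow[OF f w(1,2), of "-1"] w(3) Suc.prems(2) unfolding Q_def g_def by auto
  obtain P' where P': "finite P'" "card P' = k"
    "\<forall>p\<in>P'. st_path tail head s t E p \<and> (\<forall>e\<in>set p \<inter> N. g e = 1)"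
    "\<forall>p\<in>P'. \<forall>q\<in>P'. p \<noteq> q \<longrightarrow> set p \<inter> set q \<inter> N = {}"
    using Suc.IH[OF g] by blast
  define p where "p = map fst w"
  have wp: "w = fwd p" unfolding p_def map_map
    by (rule sym, rule map_idI) (use w(3) Q_def in auto)
  have "w \<noteq> []" using w(1) st by (cases w) auto
  then have pne: "p \<noteq> []" using p_def by simp
  have pE: "set p \<subseteq> E" using w(3) p_def Q_def by auto
  have mh: "map head p = map sdst w" using wp by simp
  have "distinct (s # map head p)" using w(2) mh by simp
  then have sp: "st_path tail head s t E p" using st_path_walk pne pE w(1) wp by simp
  have gp: "g e = f e - 1 \<and> 1 \<le> f e" if "e \<in> set p" for e
  proof -
    have "(e, True) \<in> set w" using that wp by auto
    then have "gw w e = 1" "okf f (-1) (e, True)" using gw_simple[OF w(1,2)] w(3) Q_def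
      by (auto simp: dir_def)
    then show ?thesis unfolding g_def okf_def dir_def by simp
  qed
  have pN: "f e = 1" "g e = 0" if "e \<in> set p" "e \<in> N" for e
    using gp[OF that(1)] f1 that(2) by auto
  have qN: "f e = 1" "e \<notin> set p" if "q \<in> P'" "e \<in> set q" "e \<in> N" for q e
  proof -
    have ge: "g e = 1" using P'(3) that by blast
    show "e \<notin> set p" using pN ge that(3) by force
    then have "e \<notin> fst ` set w" using p_def by simp
    then show "f e = 1" using ge gw_notin g_def by simp
  qed
  have pnot: "p \<notin> P'"
  proof
    assume "p \<in> P'"
    obtain e where "e \<in> set p" "e \<in> N" using hitN sp by blast
    then show False using qN \<open>p \<in> P'\<close> by blast
  qed
  show ?case
  proof (intro exI[of _ "insert p P'"] conjI)
    show "finite (insert p P')" using P'(1) by simp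
    show "card (insert p P') = Suc k" using P'(1,2) pnot by simp
    show "\<forall>q\<in>insert p P'. st_path tail head s t E q \<and> (\<forall>e\<in>set q \<inter> N. f e = 1)"
      using sp pN P'(3) qN by blast
    show "\<forall>q\<in>insert p P'. \<forall>r\<in>insert p P'. q \<noteq> r \<longrightarrow> set q \<inter> set r \<inter> N = {}"
      using P'(4) qN by blast
  qed
qed

lemma family_bound:
  assumes "\<forall>p\<in>P. st_path tail head s t E p" "\<forall>p\<in>P. \<forall>q\<in>P. p \<noteq> q \<longrightarrow> set p \<inter> set q \<inter> N = {}"
  shows "finite P \<and> card P \<le> card N"
proof -
  define h where "h = (\<lambda>p. SOME e. e \<in> set p \<inter> N)"
  have h: "h p \<in> set p \<inter> N" if "p \<in> P" for p
  proof -
    have "set p \<inter> N \<noteq> {}" using hitN assms(1) that by blast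
    then show ?thesis unfolding h_def by (rule some_in_eq[THEN iffD2])
  qed
  have inj: "inj_on h P"
  proof (rule inj_onI)
    fix p q assume pq: "p \<in> P" "q \<in> P" "h p = h q"
    show "p = q"
    proof (rule ccontr)
      assume "p \<noteq> q"
      then have "set p \<inter> set q \<inter> N = {}" using assms(2) pq by blast
      moreover have "h p \<in> set p \<inter> set q \<inter> N" using h[OF pq(1)] h[OF pq(2)] pq(3) by auto
      ultimately show False by blast
    qed
  qed
  have im: "h ` P \<subseteq> N" using h by (auto simp: image_subset_iff)
  have finN: "finite N" using NE finE finite_subset by blast
  have "finite P" using finite_imageD[OF finite_subset[OF im finN] inj] .
  then show ?thesis using card_inj_on_le[OF inj im finN] by simp
qed

lemma sigma_set_fin: "finite {card P | P. (\<forall>p\<in>P. st_path tail head s t E p) \<and>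
      (\<forall>p\<in>P. \<forall>q\<in>P. p \<noteq> q \<longrightarrow> set p \<inter> set q \<inter> N = {})}"
proof (rule finite_subset[of _ "{..card N}"])
  show "{card P | P. (\<forall>p\<in>P. st_path tail head s t E p) \<and>
      (\<forall>p\<in>P. \<forall>q\<in>P. p \<noteq> q \<longrightarrow> set p \<inter> set q \<inter> N = {})} \<subseteq> {..card N}"
  proof
    fix x assume "x \<in> {card P | P. (\<forall>p\<in>P. st_path tail head s t E p) \<and>
      (\<forall>p\<in>P. \<forall>q\<in>P. p \<noteq> q \<longrightarrow> set p \<inter> set q \<inter> N = {})}"
    then obtain P where "x = card P" "\<forall>p\<in>P. st_path tail head s t E p"
      "\<forall>p\<in>P. \<forall>q\<in>P. p \<noteq> q \<longrightarrow> set p \<inter> set q \<inter> N = {}" by blast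
    then show "x \<in> {..card N}" using family_bound[of P] by simp
  qed
qed simp

lemma min_cut:
  "\<exists>C\<subseteq>N. (\<forall>p. st_path tail head s t E p \<longrightarrow> set p \<inter> C \<noteq> {}) \<and> card C \<le> sigma_val tail head s t E N"
proof -
  define Vs where "Vs = {val f | f. flow f \<and> 0 \<le> val f}"
  have bnd: "val f \<le> int (card N)" if fl: "flow f" and nn: "0 \<le> val f" for f
  proof -
    obtain P where "finite P" "card P = nat (val f)"
      "\<forall>p\<in>P. st_path tail head s t E p" "\<forall>p\<in>P. \<forall>q\<in>P. p \<noteq> q \<longrightarrow> set p \<inter> set q \<inter> N = {}"
      using decomp[OF fl, of "nat (val f)"] nn by auto
    then have "card P \<le> card N" using family_bound by blast
    then show ?thesis using \<open>card P = nat (val f)\<close> nn by linarith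
  qed
  have z: "flow (\<lambda>_. 0) \<and> val (\<lambda>_. 0) = 0" unfolding flow_def val_def exc_def by simp
  have finV: "finite Vs" by (rule finite_subset[of _ "{0..int (card N)}"]) (use bnd Vs_def in auto)
  have neV: "Vs \<noteq> {}" using z Vs_def by force
  obtain f where f: "flow f" "0 \<le> val f" "val f = Max Vs"
    using Max_in[OF finV neV] Vs_def by auto
  have nog: "\<not> (\<exists>g. flow g \<and> val g = val f + 1)"
  proof
    assume "\<exists>g. flow g \<and> val g = val f + 1"
    then obtain g where "flow g" "val g = val f + 1" by blast
    then have "val g \<in> Vs" using f unfolding Vs_def by (intro CollectI exI[of _ g]) auto
    then have "val g \<le> Max Vs" using Max_ge[OF finV] by blast
    then show False using f \<open>val g = val f + 1\<close> by simp
  qed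
  obtain C where C: "C \<subseteq> N" "\<forall>p. st_path tail head s t E p \<longrightarrow> set p \<inter> C \<noteq> {}" "int (card C) = val f"
    using cut_or_aug[OF f(1)] nog by blast
  obtain P where P: "card P = card C"
    "\<forall>p\<in>P. st_path tail head s t E p" "\<forall>p\<in>P. \<forall>q\<in>P. p \<noteq> q \<longrightarrow> set p \<inter> set q \<inter> N = {}"
    using decomp[OF f(1), of "card C"] C(3) by auto
  have "card C \<le> sigma_val tail head s t E N"
    unfolding sigma_val_def using P by (intro Max_ge[OF sigma_set_fin] CollectI exI[of _ P]) auto
  then show ?thesis using C by blast
qed


lemma st_path_mono: "st_path tail head s t A p \<Longrightarrow> A \<subseteq> B \<Longrightarrow> st_path tail head s t B p"
  unfolding st_path_def by blast

lemma gamma_fin: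
  assumes "S \<subseteq> N"
  shows "finite {card P | P. (\<forall>p\<in>P. st_path tail head s t (S \<union> (E - N)) p) \<and>
      (\<forall>p\<in>P. \<forall>q\<in>P. p \<noteq> q \<longrightarrow> set p \<inter> set q = {})}"
proof (rule finite_subset[of _ "{..card N}"])
  show "{card P | P. (\<forall>p\<in>P. st_path tail head s t (S \<union> (E - N)) p) \<and>
      (\<forall>p\<in>P. \<forall>q\<in>P. p \<noteq> q \<longrightarrow> set p \<inter> set q = {})} \<subseteq> {..card N}"
  proof
    fix x assume "x \<in> {card P | P. (\<forall>p\<in>P. st_path tail head s t (S \<union> (E - N)) p) \<and>
      (\<forall>p\<in>P. \<forall>q\<in>P. p \<noteq> q \<longrightarrow> set p \<inter> set q = {})}"
    then obtain P where P: "x = card P" "\<forall>p\<in>P. st_path tail head s t (S \<union> (E - N)) p"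
      "\<forall>p\<in>P. \<forall>q\<in>P. p \<noteq> q \<longrightarrow> set p \<inter> set q = {}" by blast
    have "\<forall>p\<in>P. st_path tail head s t E p" using P(2) st_path_mono assms NE by blast
    moreover have "\<forall>p\<in>P. \<forall>q\<in>P. p \<noteq> q \<longrightarrow> set p \<inter> set q \<inter> N = {}" using P(3) by blast
    ultimately show "x \<in> {..card N}" using family_bound[of P] P(1) by simp
  qed
qed simp

lemma gamma_ge1:
  assumes "S \<subseteq> N" "st_path tail head s t (S \<union> (E - N)) p"
  shows "1 \<le> gamma_val tail head s t E N S"
  unfolding gamma_val_def using assms
  by (intro Max_ge[OF gamma_fin[OF assms(1)]] CollectI exI[of _ "{p}"]) auto

lemma ne_imp_nonempty: "{card P | P. (\<forall>p\<in>P. st_path tail head s t A p) \<and>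
      (\<forall>p\<in>P. \<forall>q\<in>P. p \<noteq> q \<longrightarrow> set p \<inter> set q = {})} \<noteq> {}"
proof -
  have "card {} \<in> {card P | P. (\<forall>p\<in>P. st_path tail head s t A p) \<and>
      (\<forall>p\<in>P. \<forall>q\<in>P. p \<noteq> q \<longrightarrow> set p \<inter> set q = {})}"
    by (intro CollectI exI[of _ "{}"]) simp
  then show ?thesis by blast
qed

lemma gamma_le_cut:
  assumes "S \<subseteq> N" "C \<subseteq> N" "\<forall>p. st_path tail head s t E p \<longrightarrow> set p \<inter> C \<noteq> {}"
  shows "gamma_val tail head s t E N S \<le> card (C \<inter> S)"
  unfolding gamma_val_def
proof (rule Max.boundedI[OF gamma_fin[OF assms(1)]])
  show "{card P | P. (\<forall>p\<in>P. st_path tail head s t (S \<union> (E - N)) p) \<and>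
      (\<forall>p\<in>P. \<forall>q\<in>P. p \<noteq> q \<longrightarrow> set p \<inter> set q = {})} \<noteq> {}"
    by (rule ne_imp_nonempty)
next
  fix x assume "x \<in> {card P | P. (\<forall>p\<in>P. st_path tail head s t (S \<union> (E - N)) p) \<and>
      (\<forall>p\<in>P. \<forall>q\<in>P. p \<noteq> q \<longrightarrow> set p \<inter> set q = {})}"
  then obtain P where P: "x = card P" "\<forall>p\<in>P. st_path tail head s t (S \<union> (E - N)) p"
    "\<forall>p\<in>P. \<forall>q\<in>P. p \<noteq> q \<longrightarrow> set p \<inter> set q = {}" by blast
  define h where "h = (\<lambda>p. SOME e. e \<in> set p \<inter> C)"
  have h: "h p \<in> set p \<inter> (C \<inter> S)" if "p \<in> P" for p
  proof -
    have sp: "st_path tail head s t E p" using P(2) that st_path_mono assms(1) NE by blast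
    have "set p \<inter> C \<noteq> {}" using assms(3) sp by blast
    then have "h p \<in> set p \<inter> C" unfolding h_def by (rule some_in_eq[THEN iffD2])
    moreover have "set p \<subseteq> S \<union> (E - N)" using P(2) that unfolding st_path_def by blast
    ultimately show ?thesis using assms(2) by blast
  qed
  have inj: "inj_on h P"
  proof (rule inj_onI)
    fix p q assume pq: "p \<in> P" "q \<in> P" "h p = h q"
    show "p = q"
    proof (rule ccontr)
      assume "p \<noteq> q"
      then have "set p \<inter> set q = {}" using P(3) pq by blast
      moreover have "h p \<in> set p \<inter> set q" using h[OF pq(1)] h[OF pq(2)] pq(3) by auto
      ultimately show False by blast
    qed
  qed
  have im: "h ` P \<subseteq> C \<inter> S" using h by (auto simp: image_subset_iff)
  have "C \<subseteq> E" using assms(2) NE by (rule subset_trans)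
  then have "finite C" using finE by (rule finite_subset)
  then have fin: "finite (C \<inter> S)" by simp
  show "x \<le> card (C \<inter> S)" using card_inj_on_le[OF inj im fin] P(1) by simp
qed

lemma gamma_empty: "gamma_val tail head s t E N {} = 0"
proof -
  have "{card P | P. (\<forall>p\<in>P. st_path tail head s t ({} \<union> (E - N)) p) \<and>
      (\<forall>p\<in>P. \<forall>q\<in>P. p \<noteq> q \<longrightarrow> set p \<inter> set q = {})} = {0}"
  proof -
    have "P = {}" if "\<forall>p\<in>P. st_path tail head s t ({} \<union> (E - N)) p" for P :: "'e list set"
    proof (rule ccontr)
      assume "P \<noteq> {}"
      then obtain p where "p \<in> P" by blast
      then have sp: "st_path tail head s t (E - N) p" using that by simp
      then have "st_path tail head s t E p" using st_path_mono by blast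
      then have "set p \<inter> N \<noteq> {}" using hitN by blast
      moreover have "set p \<subseteq> E - N" using sp unfolding st_path_def by blast
      ultimately show False by blast
    qed
    then show ?thesis by (auto intro!: exI[of _ "{}"]) (metis card.empty)
  qed
  then show ?thesis unfolding gamma_val_def by simp
qed

end

theorem lemma11:
  fixes V :: "'v set" and E N :: "'e set" and tail head :: "'e \<Rightarrow> 'v" and s t :: 'v
  assumes "finite V" and "finite E"
    and "\<forall>e\<in>E. tail e \<in> V \<and> head e \<in> V"
    and "s \<in> V" and "t \<in> V" and "s \<noteq> t"
    and "N \<subseteq> E"
    and "\<forall>p. st_path tail head s t E p \<longrightarrow> set p \<inter> N \<noteq> {}"
    and "\<forall>e\<in>E. \<exists>p. st_path tail head s t E p \<and> e \<in> set p"
    and "sigma_val tail head s t E N \<ge> 2"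
  defines "v \<equiv> gamma_tilde tail head s t E N"
    and "X0 \<equiv> imputations tail head s t E N"
  shows "(\<exists>x. lp_feasible N v X0 0 x) \<and> (\<forall>e x. lp_feasible N v X0 e x \<longrightarrow> e \<le> 0)
         \<and> lp_opt_value N v X0 = 0
         \<and> lp_opt_set N v X0 = core_tilde tail head s t E N"
proof -
  interpret netw tail head s t E N using assms by unfold_locales auto
  define sg where "sg = sigma_val tail head s t E N"
  have sg2: "2 \<le> sg" using assms(10) sg_def by simp
  have NE': "N \<subseteq> E" using assms(7) .
  have finN: "finite N" using NE' assms(2) by (rule finite_subset)
  have vS: "v S = (if S = N then real sg else real (gamma_val tail head s t E N S))" for S
    unfolding v_def gamma_tilde_def sg_def by simp
  obtain P0 where P0: "sg = card P0" "\<forall>p\<in>P0. st_path tail head s t E p"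
      "\<forall>p\<in>P0. \<forall>q\<in>P0. p \<noteq> q \<longrightarrow> set p \<inter> set q \<inter> N = {}"
  proof -
    have "sg \<in> {card P | P. (\<forall>p\<in>P. st_path tail head s t E p) \<and>
      (\<forall>p\<in>P. \<forall>q\<in>P. p \<noteq> q \<longrightarrow> set p \<inter> set q \<inter> N = {})}"
      unfolding sg_def sigma_val_def
    proof (rule Max_in[OF sigma_set_fin])
      have "card {} \<in> {card P | P. (\<forall>p\<in>P. st_path tail head s t E p) \<and>
        (\<forall>p\<in>P. \<forall>q\<in>P. p \<noteq> q \<longrightarrow> set p \<inter> set q \<inter> N = {})}"
        by (intro CollectI exI[of _ "{}"]) simp
      then show "{card P | P. (\<forall>p\<in>P. st_path tail head s t E p) \<and>
        (\<forall>p\<in>P. \<forall>q\<in>P. p \<noteq> q \<longrightarrow> set p \<inter> set q \<inter> N = {})} \<noteq> {}" by blast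
    qed
    then show ?thesis using that by blast
  qed
  have finP0: "finite P0" using P0(1) sg2 card.infinite by fastforce
  have two: "\<exists>q\<in>P0. q \<noteq> p" if "p \<in> P0" for p
  proof (rule ccontr)
    assume "\<not> (\<exists>q\<in>P0. q \<noteq> p)"
    then have "P0 \<subseteq> {p}" by blast
    then have "card P0 \<le> 1" using card_mono[of "{p}" P0] by simp
    then show False using P0(1) sg2 by simp
  qed
  have P0hit: "set p \<inter> N \<noteq> {}" if "p \<in> P0" for p using hitN P0(2) that by blast
  obtain p1 where p1: "p1 \<in> P0" using sg2 P0(1) by (metis card.empty ex_in_conv not_numeral_le_zero)
  obtain i0 where i0: "i0 \<in> N" using P0hit[OF p1] by blast
  have notfix: "S \<notin> fixset N X0" if S1: "S \<subseteq> N" and S2: "S \<noteq> {}" and S3: "S \<noteq> N" for S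
  proof
    assume fx: "S \<in> fixset N X0"
    obtain i where i: "i \<in> S" using S2 by blast
    obtain j where j: "j \<in> N" "j \<notin> S" using S1 S3 by blast
    define xi :: "'e \<Rightarrow> 'e \<Rightarrow> real" where "xi = (\<lambda>k. \<lambda>e. if e = k then real sg else 0)"
    have inX: "xi k \<in> X0" if "k \<in> N" for k
      unfolding X0_def imputations_def xi_def sg_def using that finN by (auto simp: sum.delta)
    have sm: "sum (xi k) S = (if k \<in> S then real sg else 0)" for k
      unfolding xi_def using finite_subset[OF S1 finN] by (simp add: sum.delta)
    have "sum (xi i) S = sum (xi j) S" using fx inX[of i] inX[of j] i j S1
      unfolding fixset_def by blast
    then show False using sm[of i] sm[of j] i j sg2 by simp
  qed
  have fixed: "S = {} \<or> S = N" if "S \<in> fixset N X0" for S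
    using notfix[of S] that unfolding fixset_def by blast
  obtain C where C: "C \<subseteq> N" "\<forall>p. st_path tail head s t E p \<longrightarrow> set p \<inter> C \<noteq> {}" "card C \<le> sg"
    using min_cut sg_def by blast
  have finC: "finite C" using C(1) finN by (rule finite_subset)
  define x0 where "x0 = (\<lambda>e. (of_bool (e \<in> C) :: real) + (if e = i0 then real sg - real (card C) else 0))"
  have x0S: "real (card (C \<inter> S)) \<le> sum x0 S" if "S \<subseteq> N" for S
  proof -
    have fS: "finite S" using that finN by (rule finite_subset)
    have "sum x0 S = (\<Sum>e\<in>S. (of_bool (e \<in> C) :: real)) + (\<Sum>e\<in>S. if e = i0 then real sg - real (card C) else 0)"
      unfolding x0_def by (simp add: sum.distrib)
    moreover have "(\<Sum>e\<in>S. (of_bool (e \<in> C) :: real)) = real (card (C \<inter> S))"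
      using fS by (simp add: Int_commute)
    moreover have "0 \<le> (\<Sum>e\<in>S. if e = i0 then real sg - real (card C) else 0)"
      using C(3) by (intro sum_nonneg) auto
    ultimately show ?thesis by linarith
  qed
  have x0N: "sum x0 N = real sg"
  proof -
    have "sum x0 N = (\<Sum>e\<in>N. (of_bool (e \<in> C) :: real)) + (\<Sum>e\<in>N. if e = i0 then real sg - real (card C) else 0)"
      unfolding x0_def by (simp add: sum.distrib)
    also have "(\<Sum>e\<in>N. (of_bool (e \<in> C) :: real)) = real (card C)"
      using finN C(1) by (simp add: Int_absorb1)
    also have "(\<Sum>e\<in>N. if e = i0 then real sg - real (card C) else 0) = real sg - real (card C)"
      using finN i0 by (simp add: sum.delta)
    finally show ?thesis by simp
  qed
  have x0X: "x0 \<in> X0"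
    unfolding X0_def imputations_def using x0N C(1,3) i0 unfolding sg_def[symmetric]
    by (auto simp: x0_def)
  have x0core: "x0 \<in> core_tilde tail head s t E N"
    unfolding core_tilde_def
  proof (intro CollectI conjI allI impI)
    show "x0 \<in> imputations tail head s t E N" using x0X X0_def by simp
  next
    fix S assume S: "S \<subseteq> N"
    show "gamma_tilde tail head s t E N S \<le> sum x0 S"
    proof (cases "S = N")
      case True then show ?thesis using x0N unfolding gamma_tilde_def sg_def by simp
    next
      case False
      have "gamma_val tail head s t E N S \<le> card (C \<inter> S)" using gamma_le_cut[OF S C(1,2)] .
      then show ?thesis using x0S[OF S] False unfolding gamma_tilde_def by simp
    qed
  qed
  have feas0: "lp_feasible N v X0 0 x \<longleftrightarrow> x \<in> core_tilde tail head s t E N" for x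
  proof
    assume fe: "lp_feasible N v X0 0 x"
    then have xX: "x \<in> X0" and cons: "\<And>S. S \<subseteq> N \<Longrightarrow> S \<notin> fixset N X0 \<Longrightarrow> v S \<le> sum x S"
      unfolding lp_feasible_def by auto
    show "x \<in> core_tilde tail head s t E N"
      unfolding core_tilde_def
    proof (intro CollectI conjI allI impI)
      show "x \<in> imputations tail head s t E N" using xX X0_def by simp
    next
      fix S assume S: "S \<subseteq> N"
      show "gamma_tilde tail head s t E N S \<le> sum x S"
      proof (cases "S \<in> fixset N X0")
        case False then show ?thesis using cons[OF S] v_def by simp
      next
        case True
        then have "S = {} \<or> S = N" by (rule fixed)
        then show ?thesis
        proof
          assume "S = {}"
          moreover have "{} \<noteq> N" using i0 by blast
          ultimately show ?thesis using gamma_empty unfolding gamma_tilde_def by simp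
        next
          assume "S = N"
          then show ?thesis using xX unfolding X0_def imputations_def gamma_tilde_def by simp
        qed
      qed
    qed
  next
    assume xc: "x \<in> core_tilde tail head s t E N"
    then show "lp_feasible N v X0 0 x"
      unfolding lp_feasible_def core_tilde_def X0_def v_def by auto
  qed
  have ex0: "\<exists>x. lp_feasible N v X0 0 x" using feas0 x0core by blast
  have le0: "e \<le> 0" if fe: "lp_feasible N v X0 e x" for e x
  proof (rule ccontr)
    assume "\<not> e \<le> 0"
    then have epos: "0 < e" by simp
    have xX: "x \<in> X0" and cons: "\<And>S. S \<subseteq> N \<Longrightarrow> S \<notin> fixset N X0 \<Longrightarrow> (1 + e) * v S \<le> sum x S"
      using fe unfolding lp_feasible_def by auto
    have xnn: "\<forall>i\<in>N. 0 \<le> x i" and xN: "sum x N = real sg"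
      using xX unfolding X0_def imputations_def sg_def by auto
    define A where "A = (\<lambda>p. set p \<inter> N)"
    have Ap: "1 + e \<le> sum x (A p)" if p: "p \<in> P0" for p
    proof -
      have sub: "A p \<subseteq> N" unfolding A_def by blast
      have ne: "A p \<noteq> {}" using P0hit[OF p] A_def by simp
      obtain q where q: "q \<in> P0" "q \<noteq> p" using two[OF p] by blast
      have "set p \<inter> set q \<inter> N = {}" using P0(3) p q by blast
      moreover have "set q \<inter> N \<noteq> {}" using P0hit[OF q(1)] .
      ultimately have nN: "A p \<noteq> N" unfolding A_def by blast
      have "st_path tail head s t (A p \<union> (E - N)) p"
        using P0(2) p st_path_mono unfolding A_def st_path_def by blast
      then have g1: "1 \<le> gamma_val tail head s t E N (A p)" using gamma_ge1 sub by blast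
      have "(1 + e) * v (A p) \<le> sum x (A p)" using cons[OF sub notfix[OF sub ne nN]] .
      moreover have "v (A p) = real (gamma_val tail head s t E N (A p))" using vS nN by simp
      moreover have "(1 + e) * 1 \<le> (1 + e) * real (gamma_val tail head s t E N (A p))"
        using g1 epos by (intro mult_left_mono) auto
      ultimately show ?thesis by simp
    qed
    have "real sg * (1 + e) = (\<Sum>p\<in>P0. 1 + e)" using P0(1) by simp
    also have "\<dots> \<le> (\<Sum>p\<in>P0. sum x (A p))" using Ap by (rule sum_mono)
    also have "\<dots> = sum x (\<Union>(A ` P0))"
    proof (rule sum.UNION_disjoint[symmetric])
      show "finite P0" by (rule finP0)
      show "\<forall>p\<in>P0. finite (A p)" unfolding A_def using finN by simp
      show "\<forall>p\<in>P0. \<forall>q\<in>P0. p \<noteq> q \<longrightarrow> A p \<inter> A q = {}" using P0(3) unfolding A_def by blast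
    qed
    also have "\<dots> \<le> sum x N"
      using xnn finN by (intro sum_mono2) (auto simp: A_def)
    also have "\<dots> = real sg" by (rule xN)
    finally have "real sg * (1 + e) \<le> real sg" .
    moreover have "real sg * 1 < real sg * (1 + e)" using sg2 epos by simp
    ultimately show False by simp
  qed
  have opt: "lp_opt_value N v X0 = 0"
    unfolding lp_opt_value_def by (rule Greatest_equality) (use ex0 le0 in auto)
  have optset: "lp_opt_set N v X0 = core_tilde tail head s t E N"
    unfolding lp_opt_set_def opt using feas0 by auto
  show ?thesis using ex0 le0 opt optset by blast
qed

end
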